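(* Let $t>0$, $x\in\mathbb{R}$, let $v_0$ be continuous and bounded on $\mathbb{R}$, and let $c$ be continuous on $[0,\infty)\times\mathbb{R}$ with lower bound $m$, having an $x$-derivative $c_x$ on $]0,\infty)\times\mathbb{R}$ that extends continuously and boundedly to $[0,\infty)\times\mathbb{R}$. For integers $n\ge1$, $t_i=i/n$ and $w\in C_W$ define $$F_n(w)=\exp\Big(\frac n2\sum_{i=1}^n\big[(1-\mathrm{ch}(2t/n))w(t_i)^2+(1-\mathrm{ch}(2t/n)^{-1})w(t_{i-1})^2\big]\Big),$$ $$G_n(w)=\exp\Big(-\frac12\frac{\mathrm{sh}(2t/n)}{\mathrm{ch}(2t/n)}\sum_{j=0}^{n-1}\Big((n\,\mathrm{sh}(2t/n))^{1/2}w(t_j)+\frac{x}{\mathrm{ch}(2t/n)^j}\Big)^2\Big),$$ $$H_n(w)=\exp\Big(-\frac tn\sum_{j=0}^{n-1}c\Big(\frac{(n-j)t}{n},(n\,\mathrm{sh}(2t/n))^{1/2}w(j/n)+\frac{x}{\mathrm{ch}(2t/n)^j}\Big)\Big).$$ Then for all $w\in C_W$: (i) $0\le F_n(w)\le1$ and $\lim_{n\to\infty}F_n(w)=1$; (ii) $0\le G_n(w)\le1$ and $\lim_{n\to\infty}G_n(w)=\exp\big(-t\int_0^1(x+\sqrt{2t}\,w(s))^2ds\big)$; (iii) $0\le H_n(w)\le e^{-mt}$ and $\lim_{n\to\infty}H_n(w)=\exp\big(-t\int_0^1c(t(1-s),\sqrt{2t}\,w(s)+x)\,ds\big)$; (iv)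 $\big|v_0\big((n\,\mathrm{sh}(2t/n))^{1/2}w(1)+\frac{x}{\mathrm{ch}(2t/n)^n}\big)\big|\le\|v_0\|_\infty$ and $\lim_{n\to\infty}v_0\big((n\,\mathrm{sh}(2t/n))^{1/2}w(1)+\frac{x}{\mathrm{ch}(2t/n)^n}\big)=v_0(\sqrt{2t}\,w(1)+x)$.
   Context: $C_W$ is the set of real continuous functions $w$ on $[0,1]$ with $w(0)=0$. $\mathrm{ch},\mathrm{sh}$ are hyperbolic cosine and sine. *)

theory Defs
  imports "HOL-Analysis.Analysis"
begin

definition CW :: "(real \<Rightarrow> real) set" where
  "CW = {w. continuous_on {0..1} w \<and> w 0 = 0}"

definition Fn :: "real \<Rightarrow> (real \<Rightarrow> real) \<Rightarrow> nat \<Rightarrow> real" where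
  "Fn t w n = exp (real n / 2 * (\<Sum>i=1..n.
      (1 - cosh (2*t / real n)) * (w (real i / real n))^2
    + (1 - inverse (cosh (2*t / real n))) * (w (real (i - 1) / real n))^2))"

definition Gn :: "real \<Rightarrow> real \<Rightarrow> (real \<Rightarrow> real) \<Rightarrow> nat \<Rightarrow> real" where
  "Gn t x w n = exp (- (1/2) * (sinh (2*t / real n) / cosh (2*t / real n)) *
     (\<Sum>j=0..n-1. (sqrt (real n * sinh (2*t / real n)) * w (real j / real n)
        + x / cosh (2*t / real n) ^ j)^2))"

definition Hn :: "real \<Rightarrow> real \<Rightarrow> (real \<Rightarrow> real \<Rightarrow> real) \<Rightarrow> (real \<Rightarrow> real) \<Rightarrow> nat \<Rightarrow> real" where
  "Hn t x c w n = exp (- (t / real n) * (\<Sum>j=0..n-1.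
      c (real (n - j) * t / real n)
        (sqrt (real n * sinh (2*t / real n)) * w (real j / real n)
          + x / cosh (2*t / real n) ^ j)))"

definition supnorm :: "(real \<Rightarrow> real) \<Rightarrow> real" where
  "supnorm f = (SUP y. \<bar>f y\<bar>)"

end

theory Submission
  imports Defs "HOL-Real_Asymp.Real_Asymp"
begin

lemma riemann_sum:
  fixes f :: "real \<Rightarrow> real"
  assumes fc: "continuous_on {0..1} f"
  shows "(\<lambda>n. (\<Sum>j<n. f (real j / real n)) / real n) \<longlonglongrightarrow> integral {0..1} f"
proof (rule LIMSEQ_I)
  fix r :: real assume r: "r > 0"
  have "uniformly_continuous_on {0..1} f"
    using compact_uniformly_continuous[OF fc] by simp
  then obtain d where d: "d > 0" and dd: "\<And>x x'. x \<in> {0..1} \<Longrightarrow> x' \<in> {0..1} \<Longrightarrow> dist x' x < d \<Longrightarrow> dist (f x') (f x) < r/2"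
    unfolding uniformly_continuous_on_def using r by (metis half_gt_zero)
  obtain N :: nat where N: "1 / d < real N"
    using reals_Archimedean2 by blast
  have Npos: "N > 0" using N d
    by (metis divide_pos_pos gr0I less_numeral_extra(1) of_nat_0 order_less_asym)
  show "\<exists>no. \<forall>n\<ge>no. norm ((\<Sum>j<n. f (real j / real n)) / real n - integral {0..1} f) < r"
  proof (intro exI allI impI)
    fix n assume nN: "N \<le> n"
    have npos: "real n > 0" using Npos nN by simp
    have nd: "1 / real n < d"
    proof -
      have "1 / d < real n" using N nN by (meson le_less_trans not_le of_nat_le_iff)
      then show ?thesis using d npos by (simp add: field_simps)
    qed
    have intg: "f integrable_on {a..b}" if "0 \<le> a" "b \<le> 1" for a b
      using integrable_continuous_interval[OF continuous_on_subset[OF fc]] that by auto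
    have split: "integral {0..real k / real n} f = (\<Sum>j<k. integral {real j / real n..real (Suc j) / real n} f)"
      if "k \<le> n" for k
      using that
    proof (induction k)
      case 0 then show ?case by simp
    next
      case (Suc k)
      have le1: "real (Suc k) / real n \<le> 1" using Suc.prems npos by simp
      have "integral {0..real k / real n} f + integral {real k / real n..real (Suc k) / real n} f
            = integral {0..real (Suc k) / real n} f"
        by (rule Henstock_Kurzweil_Integration.integral_combine) (use npos le1 intg in \<open>auto simp: divide_right_mono\<close>)
      then show ?case using Suc by simp
    qed
    have piece: "\<bar>integral {real j / real n..real (Suc j) / real n} f - f (real j / real n) / real n\<bar> \<le> r/2 / real n"
      if "j < n" for j
    proof -
      define a where "a = real j / real n"
      define b where "b = real (Suc j) / real n"
      have ab: "0 \<le> a" "a \<le> b" "b \<le> 1" "b - a = 1 / real n"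
        using that npos by (auto simp: a_def b_def divide_right_mono field_simps)
      have ig: "(\<lambda>s. f s - f a) integrable_on {a..b}"
        using intg ab by (intro integrable_diff) auto
      have "norm (integral {a..b} (\<lambda>s. f s - f a)) \<le> r/2 * Henstock_Kurzweil_Integration.content (cbox a b)"
      proof (rule has_integral_bound)
        show "0 \<le> r/2" using r by simp
        show "((\<lambda>s. f s - f a) has_integral integral {a..b} (\<lambda>s. f s - f a)) (cbox a b)"
          using ig by (simp add: integrable_integral)
        fix s assume s: "s \<in> cbox a b"
        then have "dist s a < d" using ab nd by (auto simp: dist_real_def)
        then have "dist (f s) (f a) < r/2" using dd[of a s] s ab by auto
        then show "norm (f s - f a) \<le> r/2" by (simp add: dist_real_def)
      qed
      moreover have "integral {a..b} (\<lambda>s. f s - f a) = integral {a..b} f - (b - a) * f a"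
      proof -
        have "integral {a..b} (\<lambda>s. f s - f a) = integral {a..b} f - integral {a..b} (\<lambda>s. f a)"
          by (rule integral_diff[OF intg[of a b] integrable_const_ivl]) (use ab in auto)
        also have "integral {a..b} (\<lambda>s. f a) = (b - a) * f a" using ab by simp
        finally show ?thesis .
      qed
      moreover have "Henstock_Kurzweil_Integration.content (cbox a b) = 1 / real n"
        using ab by simp
      ultimately have "\<bar>integral {a..b} f - (b - a) * f a\<bar> \<le> r/2 * (1 / real n)"
        by simp
      then have "\<bar>integral {a..b} f - f a / real n\<bar> \<le> r/2 / real n"
        using ab(4) by simp
      then show ?thesis unfolding a_def b_def .
    qed
    have "integral {0..1} f = (\<Sum>j<n. integral {real j / real n..real (Suc j) / real n} f)"
      using split[of n] npos by simp
    then have "\<bar>(\<Sum>j<n. f (real j / real n)) / real n - integral {0..1} f\<bar>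
       = \<bar>\<Sum>j<n. (f (real j / real n) / real n - integral {real j / real n..real (Suc j) / real n} f)\<bar>"
      by (simp add: sum_divide_distrib sum_subtractf)
    also have "\<dots> \<le> (\<Sum>j<n. \<bar>f (real j / real n) / real n - integral {real j / real n..real (Suc j) / real n} f\<bar>)"
      by (rule sum_abs)
    also have "\<dots> \<le> (\<Sum>j<n. r/2 / real n)"
      using piece by (intro sum_mono) (simp add: abs_minus_commute)
    also have "\<dots> = r/2" using npos by simp
    also have "\<dots> < r" using r by simp
    finally show "norm ((\<Sum>j<n. f (real j / real n)) / real n - integral {0..1} f) < r" by simp
  qed
qed

lemma riemann_perturb:
  fixes g :: "nat \<Rightarrow> nat \<Rightarrow> real" and f :: "real \<Rightarrow> real"
  assumes fc: "continuous_on {0..1} f"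
    and close: "\<And>e. e > 0 \<Longrightarrow> eventually (\<lambda>n. \<forall>j<n. \<bar>g n j - f (real j / real n)\<bar> \<le> e) sequentially"
  shows "(\<lambda>n. (\<Sum>j<n. g n j) / real n) \<longlonglongrightarrow> integral {0..1} f"
proof -
  have D: "(\<lambda>n. (\<Sum>j<n. g n j) / real n - (\<Sum>j<n. f (real j / real n)) / real n) \<longlonglongrightarrow> 0"
  proof (rule LIMSEQ_I)
    fix r :: real assume r: "r > 0"
    from close[of "r/2"] r obtain N where N: "\<And>n. n \<ge> N \<Longrightarrow> \<forall>j<n. \<bar>g n j - f (real j / real n)\<bar> \<le> r/2"
      unfolding eventually_sequentially by auto
    show "\<exists>no. \<forall>n\<ge>no. norm ((\<Sum>j<n. g n j) / real n - (\<Sum>j<n. f (real j / real n)) / real n - 0) < r"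
    proof (intro exI allI impI)
      fix n assume n: "n \<ge> N"
      show "norm ((\<Sum>j<n. g n j) / real n - (\<Sum>j<n. f (real j / real n)) / real n - 0) < r"
      proof (cases "n = 0")
        case True then show ?thesis using r by simp
      next
        case False
        then have npos: "real n > 0" by simp
        have "\<bar>(\<Sum>j<n. g n j) - (\<Sum>j<n. f (real j / real n))\<bar> = \<bar>\<Sum>j<n. (g n j - f (real j / real n))\<bar>"
          by (simp add: sum_subtractf)
        also have "\<dots> \<le> (\<Sum>j<n. \<bar>g n j - f (real j / real n)\<bar>)" by (rule sum_abs)
        also have "\<dots> \<le> (\<Sum>j<n. r/2)" using N[OF n] by (intro sum_mono) auto
        also have "\<dots> = real n * (r/2)" by simp
        finally have "\<bar>(\<Sum>j<n. g n j) - (\<Sum>j<n. f (real j / real n))\<bar> / real n \<le> r/2"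
          using npos by (simp add: divide_le_eq mult.commute)
        then have "\<bar>(\<Sum>j<n. g n j) / real n - (\<Sum>j<n. f (real j / real n)) / real n\<bar> \<le> r/2"
          using npos by (simp add: diff_divide_distrib [symmetric])
        then show ?thesis using r by simp
      qed
    qed
  qed
  have "(\<lambda>n. ((\<Sum>j<n. g n j) / real n - (\<Sum>j<n. f (real j / real n)) / real n) + (\<Sum>j<n. f (real j / real n)) / real n)
        \<longlonglongrightarrow> 0 + integral {0..1} f"
    by (rule tendsto_add[OF D riemann_sum[OF fc]])
  then show ?thesis by simp
qed

lemma riemann_phi:
  fixes \<phi> :: "real \<Rightarrow> real \<Rightarrow> real" and w :: "real \<Rightarrow> real" and A :: "nat \<Rightarrow> real"
    and B :: "nat \<Rightarrow> nat \<Rightarrow> real"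
  assumes \<phi>c: "continuous_on ({0..1} \<times> UNIV) (\<lambda>p. \<phi> (fst p) (snd p))"
    and wc: "continuous_on {0..1} w"
    and A: "A \<longlonglongrightarrow> \<alpha>"
    and B: "\<And>e. e > 0 \<Longrightarrow> eventually (\<lambda>n. \<forall>j<n. \<bar>B n j - x\<bar> \<le> e) sequentially"
  shows "(\<lambda>n. (\<Sum>j<n. \<phi> (real j / real n) (A n * w (real j / real n) + B n j)) / real n)
           \<longlonglongrightarrow> integral {0..1} (\<lambda>s. \<phi> s (\<alpha> * w s + x))"
proof (rule riemann_perturb)
  show "continuous_on {0..1} (\<lambda>s. \<phi> s (\<alpha> * w s + x))"
  proof -
    have "continuous_on {0..1} ((\<lambda>p. \<phi> (fst p) (snd p)) \<circ> (\<lambda>s. (s, \<alpha> * w s + x)))"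
      by (rule continuous_on_compose[OF _ continuous_on_subset[OF \<phi>c]]) (auto intro!: continuous_intros wc)
    then show ?thesis by (simp add: o_def)
  qed
  obtain M where M0: "M > 0" and M: "\<And>s. s \<in> {0..1} \<Longrightarrow> \<bar>w s\<bar> \<le> M"
    using compact_imp_bounded[OF compact_continuous_image[OF wc compact_Icc]]
    unfolding bounded_pos by auto
  define R where "R = (\<bar>\<alpha>\<bar> + 1) * M + \<bar>x\<bar> + 1"
  define K where "K = {0..1::real} \<times> {-R..R}"
  have "uniformly_continuous_on K (\<lambda>p. \<phi> (fst p) (snd p))"
    by (rule compact_uniformly_continuous[OF continuous_on_subset[OF \<phi>c]]) (auto simp: K_def intro!: compact_Times)
  fix e :: real assume e: "e > 0"
  then obtain d where d: "d > 0" and dd: "\<And>p p'. p \<in> K \<Longrightarrow> p' \<in> K \<Longrightarrow> dist p' p < d \<Longrightarrow>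
      dist (\<phi> (fst p') (snd p')) (\<phi> (fst p) (snd p)) < e"
    using \<open>uniformly_continuous_on K _\<close> unfolding uniformly_continuous_on_def by metis
  define \<eta> where "\<eta> = min 1 (d / (2 * (M + 1)))"
  have \<eta>: "\<eta> > 0" "\<eta> \<le> 1" "\<eta> * (M + 1) \<le> d / 2"
  proof -
    show "\<eta> > 0" using d M0 by (simp add: \<eta>_def)
    show "\<eta> \<le> 1" by (simp add: \<eta>_def)
    have "\<eta> \<le> d / (2 * (M + 1))" by (simp add: \<eta>_def)
    then have "\<eta> * (M + 1) \<le> d / (2 * (M + 1)) * (M + 1)" using M0 by (intro mult_right_mono) auto
    also have "\<dots> = d / 2" using M0 by (simp add: field_simps)
    finally show "\<eta> * (M + 1) \<le> d / 2" .
  qed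
  have evA: "eventually (\<lambda>n. \<bar>A n - \<alpha>\<bar> < \<eta>) sequentially"
    using A \<eta>(1) unfolding tendsto_iff dist_real_def by blast
  show "eventually (\<lambda>n. \<forall>j<n. \<bar>\<phi> (real j / real n) (A n * w (real j / real n) + B n j)
           - \<phi> (real j / real n) (\<alpha> * w (real j / real n) + x)\<bar> \<le> e) sequentially"
    using evA B[OF \<eta>(1)]
  proof eventually_elim
    case (elim n)
    show ?case
    proof (intro allI impI)
      fix j assume j: "j < n"
      define s where "s = real j / real n"
      have s: "s \<in> {0..1}" using j by (auto simp: s_def)
      have ws: "\<bar>w s\<bar> \<le> M" using M[OF s] .
      have Bj: "\<bar>B n j - x\<bar> \<le> \<eta>" using elim j by auto
      have diff: "\<bar>(A n * w s + B n j) - (\<alpha> * w s + x)\<bar> \<le> \<eta> * (M + 1)"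
      proof -
        have "\<bar>(A n * w s + B n j) - (\<alpha> * w s + x)\<bar> = \<bar>(A n - \<alpha>) * w s + (B n j - x)\<bar>"
          by (simp add: algebra_simps)
        also have "\<dots> \<le> \<bar>A n - \<alpha>\<bar> * \<bar>w s\<bar> + \<bar>B n j - x\<bar>"
          by (metis abs_mult abs_triangle_ineq)
        also have "\<dots> \<le> \<eta> * M + \<eta>"
          using elim(1) ws Bj by (intro add_mono mult_mono) auto
        finally show ?thesis by (simp add: algebra_simps)
      qed
      have in1: "\<bar>\<alpha> * w s + x\<bar> \<le> R"
      proof -
        have "\<bar>\<alpha> * w s + x\<bar> \<le> \<bar>\<alpha>\<bar> * \<bar>w s\<bar> + \<bar>x\<bar>" by (metis abs_mult abs_triangle_ineq)
        also have "\<dots> \<le> \<bar>\<alpha>\<bar> * M + \<bar>x\<bar>" using ws by (intro add_mono mult_left_mono) auto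
        finally show ?thesis using M0 by (simp add: R_def algebra_simps)
      qed
      have in2: "\<bar>A n * w s + B n j\<bar> \<le> R"
      proof -
        have "\<bar>A n * w s + B n j\<bar> \<le> \<bar>\<alpha> * w s + x\<bar> + \<eta> * (M + 1)" using diff by linarith
        also have "\<dots> \<le> \<bar>\<alpha>\<bar> * M + \<bar>x\<bar> + 1 * (M + 1)"
        proof -
          have "\<bar>\<alpha> * w s + x\<bar> \<le> \<bar>\<alpha>\<bar> * \<bar>w s\<bar> + \<bar>x\<bar>" by (metis abs_mult abs_triangle_ineq)
          also have "\<dots> \<le> \<bar>\<alpha>\<bar> * M + \<bar>x\<bar>" using ws by (intro add_mono mult_left_mono) auto
          finally show ?thesis using \<eta> M0 by (intro add_mono) (auto intro!: mult_right_mono)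
        qed
        finally show ?thesis by (simp add: R_def algebra_simps)
      qed
      have pK: "(s, \<alpha> * w s + x) \<in> K" "(s, A n * w s + B n j) \<in> K"
        using s in1 in2 by (auto simp: K_def abs_le_iff)
      have "dist (s, A n * w s + B n j) (s, \<alpha> * w s + x) < d"
        using diff \<eta> d by (simp add: dist_Pair_Pair dist_real_def)
      from dd[OF pK this] have "dist (\<phi> s (A n * w s + B n j)) (\<phi> s (\<alpha> * w s + x)) < e" by simp
      then show "\<bar>\<phi> (real j / real n) (A n * w (real j / real n) + B n j)
           - \<phi> (real j / real n) (\<alpha> * w (real j / real n) + x)\<bar> \<le> e"
        by (simp add: dist_real_def s_def)
    qed
  qed
qed

lemma lim_A: "(t::real) > 0 \<Longrightarrow> (\<lambda>n. sqrt (real n * sinh (2*t / real n))) \<longlonglongrightarrow> sqrt (2*t)"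
proof -
  assume t: "t > 0"
  have "(\<lambda>n. real n * sinh (2*t / real n)) \<longlonglongrightarrow> 2*t"
    using t unfolding sinh_field_def by real_asymp
  then show ?thesis by (rule tendsto_real_sqrt)
qed

lemma lim_Cn: "(t::real) > 0 \<Longrightarrow> (\<lambda>n. cosh (2*t / real n) ^ n) \<longlonglongrightarrow> 1"
  unfolding cosh_field_def by real_asymp

lemma lim_F1: "(t::real) > 0 \<Longrightarrow> (\<lambda>n. real n^2 * (cosh (2*t / real n) + 1 / cosh (2*t/real n) - 2)) \<longlonglongrightarrow> 0"
  unfolding cosh_field_def by real_asymp

lemma lim_F2: "(t::real) > 0 \<Longrightarrow> (\<lambda>n. real n * (cosh (2*t/real n) - 1)) \<longlonglongrightarrow> 0"
  unfolding cosh_field_def by real_asymp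

lemma lim_G: "(t::real) > 0 \<Longrightarrow> (\<lambda>n. real n / 2 * (sinh (2*t / real n) / cosh (2*t/real n))) \<longlonglongrightarrow> t"
  unfolding cosh_field_def sinh_field_def by real_asymp

lemma inv_le: "(y::real) \<ge> 1 \<Longrightarrow> 1 - 1 / y \<le> y - 1"
proof -
  assume y: "y \<ge> 1"
  have "1 - 1 / y = (y - 1) / y" using y by (simp add: field_simps)
  also have "\<dots> \<le> (y - 1) / 1" using y by (intro divide_left_mono) auto
  finally show ?thesis by simp
qed

lemma cosh_sum_ge: "(y::real) > 0 \<Longrightarrow> 2 \<le> y + 1 / y"
proof -
  assume y: "y > 0"
  have "0 \<le> (y - 1)^2 / y" using y by simp
  also have "(y - 1)^2 / y = y + 1 / y - 2" using y by (simp add: field_simps power2_eq_square)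
  finally show ?thesis by simp
qed

lemma lim_B:
  fixes t x :: real
  assumes t: "t > 0"
  shows "\<And>e. e > 0 \<Longrightarrow> eventually (\<lambda>n. \<forall>j\<le>n. \<bar>x / cosh (2*t / real n) ^ j - x\<bar> \<le> e) sequentially"
proof -
  fix e :: real assume e: "e > 0"
  have "eventually (\<lambda>n. dist (cosh (2*t / real n) ^ n) 1 < e / (\<bar>x\<bar> + 1)) sequentially"
  proof (rule tendstoD[OF lim_Cn[OF t]])
    show "0 < e / (\<bar>x\<bar> + 1)" using e by (intro divide_pos_pos) auto
  qed
  then show "eventually (\<lambda>n. \<forall>j\<le>n. \<bar>x / cosh (2*t / real n) ^ j - x\<bar> \<le> e) sequentially"
  proof eventually_elim
    case (elim n)
    show ?case
    proof (intro allI impI)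
      fix j assume j: "j \<le> n"
      define C where "C = cosh (2*t / real n)"
      have C1: "C \<ge> 1" by (simp add: C_def cosh_real_ge_1)
      have Cj1: "C ^ j \<ge> 1" using C1 by (simp add: one_le_power)
      have Cjn: "C ^ j \<le> C ^ n" using C1 j by (simp add: power_increasing)
      have "\<bar>x / C ^ j - x\<bar> = \<bar>x\<bar> * (1 - 1 / C ^ j)"
      proof -
        have "x / C ^ j - x = - x * (1 - 1 / C ^ j)" by (simp add: algebra_simps)
        moreover have "1 - 1 / C ^ j \<ge> 0" using Cj1 by simp
        ultimately show ?thesis by (simp add: abs_mult)
      qed
      also have "\<dots> \<le> \<bar>x\<bar> * (C ^ n - 1)"
        using inv_le[OF Cj1] Cjn by (intro mult_left_mono) auto
      also have "\<dots> \<le> \<bar>x\<bar> * (e / (\<bar>x\<bar> + 1))"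
        using elim by (intro mult_left_mono) (auto simp: C_def dist_real_def)
      also have "\<dots> = e * (\<bar>x\<bar> / (\<bar>x\<bar> + 1))" by simp
      also have "\<dots> \<le> e * 1"
        using e by (intro mult_left_mono) auto
      also have "\<dots> = e" by simp
      finally show "\<bar>x / cosh (2*t / real n) ^ j - x\<bar> \<le> e" by (simp add: C_def)
    qed
  qed
qed

lemma sum_0_nm1: "n \<ge> 1 \<Longrightarrow> sum f {0..n-1} = sum f {..<(n::nat)}"
  by (cases n) (auto simp: atLeast0AtMost lessThan_Suc_atMost)

theorem lemma1:
  fixes t x m :: real and v0 :: "real \<Rightarrow> real" and c :: "real \<Rightarrow> real \<Rightarrow> real"
    and w :: "real \<Rightarrow> real"
  assumes t_pos: "t > 0"
    and v0_cont: "continuous_on UNIV v0"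
    and v0_bdd: "bounded (range v0)"
    and c_cont: "continuous_on ({0..} \<times> UNIV) (\<lambda>p. c (fst p) (snd p))"
    and c_lower: "\<forall>s\<ge>0. \<forall>y. m \<le> c s y"
    and c_deriv: "\<exists>cx :: real \<Rightarrow> real \<Rightarrow> real.
        (\<forall>s>0. \<forall>y. ((\<lambda>z. c s z) has_real_derivative cx s y) (at y))
        \<and> continuous_on ({0..} \<times> UNIV) (\<lambda>p. cx (fst p) (snd p))
        \<and> bounded ((\<lambda>p. cx (fst p) (snd p)) ` ({0..} \<times> UNIV))"
    and w_CW: "w \<in> CW"
  shows
    "((\<forall>n\<ge>1. 0 \<le> Fn t w n \<and> Fn t w n \<le> 1) \<and> (\<lambda>n. Fn t w n) \<longlonglongrightarrow> 1)
     \<and> ((\<forall>n\<ge>1. 0 \<le> Gn t x w n \<and> Gn t x w n \<le> 1) \<and>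
       (\<lambda>n. Gn t x w n) \<longlonglongrightarrow> exp (- t * integral {0..1} (\<lambda>s. (x + sqrt (2*t) * w s)^2)))
     \<and> ((\<forall>n\<ge>1. 0 \<le> Hn t x c w n \<and> Hn t x c w n \<le> exp (- m * t)) \<and>
       (\<lambda>n. Hn t x c w n) \<longlonglongrightarrow> exp (- t * integral {0..1} (\<lambda>s. c (t * (1 - s)) (sqrt (2*t) * w s + x))))
     \<and> ((\<forall>n\<ge>1. \<bar>v0 (sqrt (real n * sinh (2*t / real n)) * w 1 + x / cosh (2*t / real n) ^ n)\<bar> \<le> supnorm v0) \<and>
       (\<lambda>n. v0 (sqrt (real n * sinh (2*t / real n)) * w 1 + x / cosh (2*t / real n) ^ n))
         \<longlonglongrightarrow> v0 (sqrt (2*t) * w 1 + x))"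
proof -
  have wc: "continuous_on {0..1} w" and w0: "w 0 = 0" using w_CW by (auto simp: CW_def)
  obtain M where M0: "M > 0" and M: "\<And>s. s \<in> {0..1} \<Longrightarrow> \<bar>w s\<bar> \<le> M"
    using compact_imp_bounded[OF compact_continuous_image[OF wc compact_Icc]]
    unfolding bounded_pos by auto
  define C where "C = (\<lambda>n::nat. cosh (2*t / real n))"
  define A where "A = (\<lambda>n::nat. sqrt (real n * sinh (2*t / real n)))"
  have C1: "C n \<ge> 1" for n by (simp add: C_def cosh_real_ge_1)
  have Cpos: "C n > 0" for n using C1[of n] by simp
  have LA: "A \<longlonglongrightarrow> sqrt (2*t)" unfolding A_def by (rule lim_A[OF t_pos])
  have LB: "\<And>e. e > 0 \<Longrightarrow> eventually (\<lambda>n. \<forall>j<n. \<bar>x / C n ^ j - x\<bar> \<le> e) sequentially"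
  proof -
    fix e :: real assume "e > 0"
    from lim_B[OF t_pos this, of x] show "eventually (\<lambda>n. \<forall>j<n. \<bar>x / C n ^ j - x\<bar> \<le> e) sequentially"
      by eventually_elim (auto simp: C_def)
  qed
  have ev1: "eventually (\<lambda>n::nat. n \<ge> 1) sequentially" by (rule eventually_ge_at_top)

  define S where "S = (\<lambda>n::nat. \<Sum>i<n. (w (real i / real n))^2)"
  define E where "E = (\<lambda>n::nat. real n / 2 * ((2 - C n - 1 / C n) * S n + (1 - C n) * (w 1)^2))"
  have FE: "Fn t w n = exp (E n)" if n: "n \<ge> 1" for n
  proof -
    have tel: "(\<Sum>i<n. (w (real (Suc i) / real n))^2) = S n + (w 1)^2"
    proof -
      have "(\<Sum>i<n. (w (real (Suc i) / real n))^2 - (w (real i / real n))^2)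
            = (w (real n / real n))^2 - (w (real 0 / real n))^2"
        by (rule sum_lessThan_telescope[where f = "\<lambda>i. (w (real i / real n))^2"])
      then show ?thesis using n w0 by (simp add: S_def sum_subtractf)
    qed
    have "(\<Sum>i=1..n. (1 - cosh (2*t / real n)) * (w (real i / real n))^2
          + (1 - inverse (cosh (2*t / real n))) * (w (real (i - 1) / real n))^2)
        = (\<Sum>i<n. (1 - C n) * (w (real (Suc i) / real n))^2 + (1 - 1 / C n) * (w (real i / real n))^2)"
      by (simp add: sum.atLeast1_atMost_eq C_def inverse_eq_divide)
    also have "\<dots> = (1 - C n) * (\<Sum>i<n. (w (real (Suc i) / real n))^2) + (1 - 1 / C n) * S n"
      by (simp add: sum.distrib sum_distrib_left S_def del: of_nat_Suc)
    also have "\<dots> = (2 - C n - 1 / C n) * S n + (1 - C n) * (w 1)^2"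
      unfolding tel by (simp add: algebra_simps)
    finally show ?thesis by (simp add: Fn_def E_def)
  qed
  have S0: "S n \<ge> 0" for n by (simp add: S_def sum_nonneg)
  have SM: "S n \<le> real n * M^2" for n
  proof -
    have "S n \<le> (\<Sum>i<n. M^2)"
      unfolding S_def
    proof (rule sum_mono)
      fix i assume i: "i \<in> {..<n}"
      then have "real i / real n \<in> {0..1}" by auto
      then have "\<bar>w (real i / real n)\<bar> \<le> M" by (rule M)
      then show "(w (real i / real n))^2 \<le> M^2" by (metis abs_ge_zero power2_abs power_mono)
    qed
    then show ?thesis by simp
  qed
  have K1: "2 - C n - 1 / C n \<le> 0" for n using cosh_sum_ge[OF Cpos[of n]] by simp
  have K2: "1 - C n \<le> 0" for n using C1[of n] by simp
  have Ele: "E n \<le> 0" for n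
  proof -
    have "(2 - C n - 1 / C n) * S n \<le> 0" using K1 S0 by (simp add: mult_nonpos_nonneg)
    moreover have "(1 - C n) * (w 1)^2 \<le> 0" using K2 by (simp add: mult_nonpos_nonneg)
    ultimately show ?thesis unfolding E_def by (simp add: mult_nonneg_nonpos)
  qed
  have Elim: "E \<longlonglongrightarrow> 0"
  proof (rule Lim_null_comparison)
    define g where "g = (\<lambda>n::nat. M^2 / 2 * (real n^2 * (C n + 1 / C n - 2)) + (w 1)^2 / 2 * (real n * (C n - 1)))"
    show "eventually (\<lambda>n. norm (E n) \<le> g n) sequentially"
    proof (rule always_eventually, rule allI)
      fix n
      have "norm (E n) = real n / 2 * ((C n + 1 / C n - 2) * S n + (C n - 1) * (w 1)^2)"
        using Ele[of n] by (simp add: E_def algebra_simps)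
      also have "\<dots> \<le> real n / 2 * ((C n + 1 / C n - 2) * (real n * M^2) + (C n - 1) * (w 1)^2)"
        using K1[of n] SM[of n] C1[of n] by (intro mult_left_mono add_mono mult_left_mono) auto
      also have "\<dots> = g n" using Cpos[of n] by (simp add: g_def field_simps power2_eq_square)
      finally show "norm (E n) \<le> g n" .
    qed
    have "g \<longlonglongrightarrow> M^2 / 2 * 0 + (w 1)^2 / 2 * 0"
      unfolding g_def C_def
      by (intro tendsto_add tendsto_mult tendsto_const lim_F1[OF t_pos] lim_F2[OF t_pos])
    then show "g \<longlonglongrightarrow> 0" by simp
  qed
  have partI: "(\<forall>n\<ge>1. 0 \<le> Fn t w n \<and> Fn t w n \<le> 1) \<and> (\<lambda>n. Fn t w n) \<longlonglongrightarrow> 1"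
  proof
    show "\<forall>n\<ge>1. 0 \<le> Fn t w n \<and> Fn t w n \<le> 1" using FE Ele by auto
    have L: "(\<lambda>n. exp (E n)) \<longlonglongrightarrow> 1" using tendsto_exp[OF Elim] by simp
    have ev: "eventually (\<lambda>n. exp (E n) = Fn t w n) sequentially"
      using ev1 by eventually_elim (simp add: FE)
    show "(\<lambda>n. Fn t w n) \<longlonglongrightarrow> 1" using Lim_transform_eventually[OF L ev] .
  qed

  define GS where "GS = (\<lambda>n::nat. (\<Sum>j<n. (A n * w (real j / real n) + x / C n ^ j)^2) / real n)"
  define GT where "GT = (\<lambda>n::nat. real n / 2 * (sinh (2*t / real n) / C n))"
  have GE: "Gn t x w n = exp (- GT n * GS n)" if n: "n \<ge> 1" for n
  proof -
    have nz: "real n \<noteq> 0" using n by simp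
    show ?thesis
      unfolding Gn_def GS_def GT_def sum_0_nm1[OF n]
      using nz by (simp add: A_def C_def)
  qed
  have GS0: "GS n \<ge> 0" for n by (simp add: GS_def sum_nonneg)
  have GT0: "GT n \<ge> 0" for n using Cpos[of n] t_pos by (simp add: GT_def)
  have GSlim: "GS \<longlonglongrightarrow> integral {0..1} (\<lambda>s. (sqrt (2*t) * w s + x)^2)"
    unfolding GS_def
    by (rule riemann_phi[of "\<lambda>s y. y^2", OF _ wc LA LB]) (auto intro!: continuous_intros)
  have GTlim: "GT \<longlonglongrightarrow> t" unfolding GT_def C_def by (rule lim_G[OF t_pos])
  have partII: "(\<forall>n\<ge>1. 0 \<le> Gn t x w n \<and> Gn t x w n \<le> 1) \<and>
       (\<lambda>n. Gn t x w n) \<longlonglongrightarrow> exp (- t * integral {0..1} (\<lambda>s. (x + sqrt (2*t) * w s)^2))"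
  proof
    show "\<forall>n\<ge>1. 0 \<le> Gn t x w n \<and> Gn t x w n \<le> 1"
    proof (intro allI impI conjI)
      fix n :: nat assume n: "n \<ge> 1"
      show "0 \<le> Gn t x w n" by (simp add: Gn_def)
      have "- GT n * GS n \<le> 0" using GT0[of n] GS0[of n] by simp
      then show "Gn t x w n \<le> 1" using GE[OF n] by simp
    qed
    have ieq: "(\<lambda>s. (sqrt (2*t) * w s + x)^2) = (\<lambda>s. (x + sqrt (2*t) * w s)^2)"
      by (simp add: add.commute)
    have L: "(\<lambda>n. exp (- GT n * GS n)) \<longlonglongrightarrow> exp (- t * integral {0..1} (\<lambda>s. (x + sqrt (2*t) * w s)^2))"
      using tendsto_exp[OF tendsto_mult[OF tendsto_minus[OF GTlim] GSlim]] by (simp add: ieq)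
    have ev: "eventually (\<lambda>n. exp (- GT n * GS n) = Gn t x w n) sequentially"
      using ev1 by eventually_elim (simp add: GE)
    show "(\<lambda>n. Gn t x w n) \<longlonglongrightarrow> exp (- t * integral {0..1} (\<lambda>s. (x + sqrt (2*t) * w s)^2))"
      using Lim_transform_eventually[OF L ev] .
  qed

  define HS where "HS = (\<lambda>n::nat. (\<Sum>j<n. c (t * (1 - real j / real n)) (A n * w (real j / real n) + x / C n ^ j)) / real n)"
  have HE: "Hn t x c w n = exp (- t * HS n)" if n: "n \<ge> 1" for n
  proof -
    have nz: "real n \<noteq> 0" using n by simp
    have eqj: "(real n - real j) * t / real n = t * (1 - real j / real n)" for j
      using nz by (simp add: field_simps)
    have eqsum: "(\<Sum>j=0..n-1. c (real (n - j) * t / real n)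
        (sqrt (real n * sinh (2*t / real n)) * w (real j / real n) + x / cosh (2*t / real n) ^ j))
      = (\<Sum>j<n. c (t * (1 - real j / real n)) (A n * w (real j / real n) + x / C n ^ j))"
      unfolding sum_0_nm1[OF n] by (rule sum.cong) (auto simp: A_def C_def eqj)
    show ?thesis unfolding Hn_def eqsum HS_def using nz by simp
  qed
  have HSm: "HS n \<ge> m" if n: "n \<ge> 1" for n
  proof -
    have "(\<Sum>j<n. m) \<le> (\<Sum>j<n. c (t * (1 - real j / real n)) (A n * w (real j / real n) + x / C n ^ j))"
    proof (rule sum_mono)
      fix j assume "j \<in> {..<n}"
      then have "t * (1 - real j / real n) \<ge> 0" using t_pos by auto
      then show "m \<le> c (t * (1 - real j / real n)) (A n * w (real j / real n) + x / C n ^ j)"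
        using c_lower by blast
    qed
    then have "real n * m \<le> (\<Sum>j<n. c (t * (1 - real j / real n)) (A n * w (real j / real n) + x / C n ^ j))"
      by simp
    then show ?thesis using n by (simp add: HS_def field_simps)
  qed
  have phic: "continuous_on ({0..1} \<times> UNIV) (\<lambda>p. c (t * (1 - fst p)) (snd p))"
  proof -
    have sub: "(\<lambda>p. (t * (1 - fst p), snd p)) ` ({0..1::real} \<times> (UNIV::real set)) \<subseteq> {0..} \<times> UNIV"
      using t_pos by auto
    have "continuous_on ({0..1} \<times> UNIV) ((\<lambda>p. c (fst p) (snd p)) \<circ> (\<lambda>p. (t * (1 - fst p), snd p)))"
      by (rule continuous_on_compose[OF _ continuous_on_subset[OF c_cont sub]]) (auto intro!: continuous_intros)
    then show ?thesis by (simp add: o_def)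
  qed
  have HSlim: "HS \<longlonglongrightarrow> integral {0..1} (\<lambda>s. c (t * (1 - s)) (sqrt (2*t) * w s + x))"
    unfolding HS_def
    by (rule riemann_phi[of "\<lambda>s y. c (t * (1 - s)) y", OF phic wc LA LB])
  have partIII: "(\<forall>n\<ge>1. 0 \<le> Hn t x c w n \<and> Hn t x c w n \<le> exp (- m * t)) \<and>
       (\<lambda>n. Hn t x c w n) \<longlonglongrightarrow> exp (- t * integral {0..1} (\<lambda>s. c (t * (1 - s)) (sqrt (2*t) * w s + x)))"
  proof
    show "\<forall>n\<ge>1. 0 \<le> Hn t x c w n \<and> Hn t x c w n \<le> exp (- m * t)"
    proof (intro allI impI conjI)
      fix n :: nat assume n: "n \<ge> 1"
      show "0 \<le> Hn t x c w n" by (simp add: Hn_def)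
      have "- t * HS n \<le> - m * t" using HSm[OF n] t_pos by (simp add: mult.commute mult_left_mono)
      then show "Hn t x c w n \<le> exp (- m * t)" using HE[OF n] by simp
    qed
    have L: "(\<lambda>n. exp (- t * HS n)) \<longlonglongrightarrow> exp (- t * integral {0..1} (\<lambda>s. c (t * (1 - s)) (sqrt (2*t) * w s + x)))"
      by (intro tendsto_exp tendsto_mult tendsto_const HSlim)
    have ev: "eventually (\<lambda>n. exp (- t * HS n) = Hn t x c w n) sequentially"
      using ev1 by eventually_elim (simp add: HE)
    show "(\<lambda>n. Hn t x c w n) \<longlonglongrightarrow> exp (- t * integral {0..1} (\<lambda>s. c (t * (1 - s)) (sqrt (2*t) * w s + x)))"
      using Lim_transform_eventually[OF L ev] .
  qed

  have partIV: "(\<forall>n\<ge>1. \<bar>v0 (sqrt (real n * sinh (2*t / real n)) * w 1 + x / cosh (2*t / real n) ^ n)\<bar> \<le> supnorm v0) \<and>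
       (\<lambda>n. v0 (sqrt (real n * sinh (2*t / real n)) * w 1 + x / cosh (2*t / real n) ^ n))
         \<longlonglongrightarrow> v0 (sqrt (2*t) * w 1 + x)"
  proof
    obtain b where b: "\<And>y. \<bar>v0 y\<bar> \<le> b" using v0_bdd unfolding bounded_iff by auto
    have bdd: "bdd_above (range (\<lambda>y. \<bar>v0 y\<bar>))" using b by (intro bdd_aboveI) auto
    show "\<forall>n\<ge>1. \<bar>v0 (sqrt (real n * sinh (2*t / real n)) * w 1 + x / cosh (2*t / real n) ^ n)\<bar> \<le> supnorm v0"
      unfolding supnorm_def using cSUP_upper[OF UNIV_I bdd] by blast
    have Cn: "(\<lambda>n. C n ^ n) \<longlonglongrightarrow> 1" unfolding C_def by (rule lim_Cn[OF t_pos])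
    have arg: "(\<lambda>n. A n * w 1 + x / C n ^ n) \<longlonglongrightarrow> sqrt (2*t) * w 1 + x / 1"
      by (intro tendsto_add tendsto_mult tendsto_const tendsto_divide LA Cn) simp
    have "(\<lambda>n. v0 (A n * w 1 + x / C n ^ n)) \<longlonglongrightarrow> v0 (sqrt (2*t) * w 1 + x / 1)"
      by (rule continuous_on_tendsto_compose[OF v0_cont arg]) auto
    then show "(\<lambda>n. v0 (sqrt (real n * sinh (2*t / real n)) * w 1 + x / cosh (2*t / real n) ^ n))
         \<longlonglongrightarrow> v0 (sqrt (2*t) * w 1 + x)" by (simp add: A_def C_def)
  qed
  show ?thesis using partI partII partIII partIV by blast
qed

end
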